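(* Let $n\ge 2$, $r>0$, $I_n=\{\bm{x}\in\mathbb{R}^n: |x_i|\le r,\ i=1,\dots,n\}$, and $f\in C^1(I_n)$. Then any $h$ satisfying $h=f$ on $D_n$, $\nabla h=\nabla f$ on $D_n$, and $h\in\mathcal{H}_-(I_n,f)$ is a best one-sided $L^1$-approximant from below to $f$ with respect to $\mathcal{H}(I_n)$, i.e. $\|f-h\|_1\le\|f-\tilde h\|_1$ for every $\tilde h\in\mathcal{H}_-(I_n,f)$.
   Context: $\mathcal{H}(I_n)$ is the space of functions harmonic ($C^2$ with vanishing Laplacian) in some domain containing $I_n$; $\mathcal{H}_-(I_n,f)=\{h\in\mathcal{H}(I_n): h\le f \text{ on } I_n\}$; $\|g\|_1=\int_{I_n}|g|\,d\lambda_n$ with $\lambda_n$ Lebesgue measure. For $1\le i<j\le n$, $D^{ij}_n=\{\bm{x}\in I_n : |x_k|\le |x_i|=|x_j| \text{ for all } k\ne i,j\}$, and $D_n=\bigcup_{1\le i<j\le n}D^{ij}_n$. *)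

theory Defs
  imports "HOL-Analysis.Analysis"
begin

definition cube :: "real \<Rightarrow> (real^'n) set" where
  "cube r = {x. \<forall>i. \<bar>x $ i\<bar> \<le> r}"

definition diagset :: "real \<Rightarrow> (real^'n) set" where
  "diagset r = {x \<in> cube r. \<exists>i j. i \<noteq> j \<and> \<bar>x $ i\<bar> = \<bar>x $ j\<bar> \<and>
                  (\<forall>k. k \<noteq> i \<and> k \<noteq> j \<longrightarrow> \<bar>x $ k\<bar> \<le> \<bar>x $ i\<bar>)}"

text \<open>h is C^2 with vanishing Laplacian on the open set U. Dh is the gradient,
  Hs the Hessian (row i = gradient of the i-th partial derivative).\<close>
definition harmonic_on :: "(real^'n) set \<Rightarrow> (real^'n \<Rightarrow> real) \<Rightarrow> bool" where
  "harmonic_on U h \<longleftrightarrow> open U \<and>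
     (\<exists>Dh Hs. (\<forall>x\<in>U. (h has_derivative (\<lambda>v. Dh x \<bullet> v)) (at x)) \<and>
              (\<forall>x\<in>U. (Dh has_derivative (\<lambda>v. Hs x *v v)) (at x)) \<and>
              continuous_on U Hs \<and>
              (\<forall>x\<in>U. (\<Sum>i\<in>UNIV. Hs x $ i $ i) = 0))"

definition harm :: "(real^'n) set \<Rightarrow> (real^'n \<Rightarrow> real) set" where
  "harm S = {h. \<exists>U. S \<subseteq> U \<and> harmonic_on U h}"

definition harm_below :: "(real^'n) set \<Rightarrow> (real^'n \<Rightarrow> real) \<Rightarrow> (real^'n \<Rightarrow> real) set" where
  "harm_below S f = {h \<in> harm S. \<forall>x\<in>S. h x \<le> f x}"

definition L1norm :: "(real^'n) set \<Rightarrow> (real^'n \<Rightarrow> real) \<Rightarrow> real" where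
  "L1norm S g = integral S (\<lambda>x. \<bar>g x\<bar>)"

end

theory Submission
  imports Defs
begin


lemma ftc_piece:
  fixes F F' :: "real \<Rightarrow> real"
  assumes "a \<le> b" "\<And>s. s \<in> {a..b} \<Longrightarrow> (F has_real_derivative F' s) (at s)"
  shows "(F' has_integral (F b - F a)) {a..b}"
  using assms by (intro fundamental_theorem_of_calculus) (auto simp: has_real_derivative_iff_has_vector_derivative intro: has_vector_derivative_at_within)

lemma sq_deriv: "((\<lambda>s. (c - s)^2/2) has_real_derivative (-(c - s))) (at s)"
proof -
  have "((\<lambda>s. (c - s) * (c - s) / 2) has_real_derivative ((0 - 1) * (c - s) + (0 - 1) * (c - s)) / 2) (at s)"
    by (intro DERIV_cdivide DERIV_mult DERIV_diff DERIV_const DERIV_ident)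
  moreover have "(\<lambda>s. (c - s)^2/2) = (\<lambda>s. (c - s) * (c - s) / 2)" by (simp add: power2_eq_square)
  ultimately show ?thesis by (simp only:) (rule DERIV_cong, assumption, simp add: field_simps)
qed

lemma sq_deriv': "((\<lambda>s. (c + s)^2/2) has_real_derivative (c + s)) (at s)"
proof -
  have "((\<lambda>s. (c + s) * (c + s) / 2) has_real_derivative ((0 + 1) * (c + s) + (0 + 1) * (c + s)) / 2) (at s)"
    by (intro DERIV_cdivide DERIV_mult DERIV_add DERIV_const DERIV_ident)
  moreover have "(\<lambda>s. (c + s)^2/2) = (\<lambda>s. (c + s) * (c + s) / 2)" by (simp add: power2_eq_square)
  ultimately show ?thesis by (simp only:) (rule DERIV_cong, assumption, simp add: field_simps)
qed

lemma one_d: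
  fixes U U1 U2 :: "real \<Rightarrow> real" and r m :: real
  assumes m0: "0 \<le> m" and mr: "m \<le> r"
    and d1: "\<And>s. s \<in> {-r..r} \<Longrightarrow> (U has_real_derivative U1 s) (at s)"
    and d2: "\<And>s. s \<in> {-r..r} \<Longrightarrow> (U1 has_real_derivative U2 s) (at s)"
  shows "((\<lambda>s. (r - max \<bar>s\<bar> m)^2/2 * U2 s - (if m \<le> \<bar>s\<bar> then U s else 0)) has_integral
           (-(r - m) * (U m + U (-m)))) {-r..r}"
proof -
  let ?f = "\<lambda>s. (r - max \<bar>s\<bar> m)^2/2 * U2 s - (if m \<le> \<bar>s\<bar> then U s else 0)"
  have A: "(?f has_integral (0 - ((r-m)^2/2 * U1 m + (r - m) * U m))) {m..r}"
  proof -
    have "((\<lambda>s. (r-s)^2/2 * U2 s - U s) has_integral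
          (((r-r)^2/2 * U1 r + (r - r) * U r) - ((r-m)^2/2 * U1 m + (r - m) * U m))) {m..r}"
    proof (rule ftc_piece[where F="\<lambda>s. (r-s)^2/2 * U1 s + (r - s) * U s"])
      show "m \<le> r" by (rule mr)
      fix s assume s: "s \<in> {m..r}"
      then have s': "s \<in> {-r..r}" using m0 by auto
      have "((\<lambda>s. (r-s)^2/2 * U1 s + (r - s) * U s) has_real_derivative
         (-(r - s) * U1 s + U2 s * ((r-s)^2/2) + ((0 - 1) * U s + U1 s * (r - s)))) (at s)"
        by (intro DERIV_add DERIV_mult sq_deriv DERIV_diff DERIV_const DERIV_ident d1[OF s'] d2[OF s'])
      then show "((\<lambda>s. (r-s)^2/2 * U1 s + (r - s) * U s) has_real_derivative ((r-s)^2/2 * U2 s - U s)) (at s)"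
        by (rule DERIV_cong) (simp add: algebra_simps)
    qed
    then have H: "((\<lambda>s. (r-s)^2/2 * U2 s - U s) has_integral (0 - ((r-m)^2/2 * U1 m + (r - m) * U m))) {m..r}"
      by simp
    show ?thesis
      by (rule has_integral_spike_finite[where S="{}", OF _ _ H]) (use m0 in auto)
  qed
  have B: "(?f has_integral ((r-m)^2/2 * (U1 m - U1 (-m)))) {-m..m}"
  proof -
    have "((\<lambda>s. (r-m)^2/2 * U2 s) has_integral ((r-m)^2/2 * U1 m - (r-m)^2/2 * U1 (-m))) {-m..m}"
    proof (rule ftc_piece[where F="\<lambda>s. (r-m)^2/2 * U1 s"])
      show "-m \<le> m" using m0 by simp
      fix s assume s: "s \<in> {-m..m}"
      then have s': "s \<in> {-r..r}" using mr by auto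
      show "((\<lambda>s. (r-m)^2/2 * U1 s) has_real_derivative (r-m)^2/2 * U2 s) (at s)"
        by (rule DERIV_cmult[OF d2[OF s']])
    qed
    then have H: "((\<lambda>s. (r-m)^2/2 * U2 s) has_integral ((r-m)^2/2 * (U1 m - U1 (-m)))) {-m..m}"
      by (simp add: right_diff_distrib)
    show ?thesis
      by (rule has_integral_spike_finite[where S="{m, -m}", OF _ _ H]) auto
  qed
  have C: "(?f has_integral (((r-m)^2/2 * U1 (-m) - (r - m) * U (-m)) - 0)) {-r..-m}"
  proof -
    have "((\<lambda>s. (r+s)^2/2 * U2 s - U s) has_integral
          (((r+(-m))^2/2 * U1 (-m) - (r + (-m)) * U (-m)) - ((r+(-r))^2/2 * U1 (-r) - (r + (-r)) * U (-r)))) {-r..-m}"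
    proof (rule ftc_piece[where F="\<lambda>s. (r+s)^2/2 * U1 s - (r + s) * U s"])
      show "-r \<le> -m" using mr by simp
      fix s assume s: "s \<in> {-r..-m}"
      then have s': "s \<in> {-r..r}" using m0 by auto
      have "((\<lambda>s. (r+s)^2/2 * U1 s - (r + s) * U s) has_real_derivative
         ((r + s) * U1 s + U2 s * ((r+s)^2/2) - ((0 + 1) * U s + U1 s * (r + s)))) (at s)"
        by (intro DERIV_diff DERIV_mult sq_deriv' DERIV_add DERIV_const DERIV_ident d1[OF s'] d2[OF s'])
      then show "((\<lambda>s. (r+s)^2/2 * U1 s - (r + s) * U s) has_real_derivative ((r+s)^2/2 * U2 s - U s)) (at s)"
        by (rule DERIV_cong) (simp add: algebra_simps)
    qed
    then have H: "((\<lambda>s. (r+s)^2/2 * U2 s - U s) has_integral (((r-m)^2/2 * U1 (-m) - (r - m) * U (-m)) - 0)) {-r..-m}"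
      by simp
    show ?thesis
      by (rule has_integral_spike_finite[where S="{}", OF _ _ H]) (use m0 in auto)
  qed
  have L: "(?f has_integral ((((r-m)^2/2 * U1 (-m) - (r - m) * U (-m)) - 0) + (r-m)^2/2 * (U1 m - U1 (-m)))) {-r..m}"
    by (rule has_integral_combine[OF _ _ C B]) (use m0 mr in auto)
  have "(?f has_integral (((((r-m)^2/2 * U1 (-m) - (r - m) * U (-m)) - 0) + (r-m)^2/2 * (U1 m - U1 (-m)))
      + (0 - ((r-m)^2/2 * U1 m + (r - m) * U m)))) {-r..r}"
    by (rule has_integral_combine[OF _ _ L A]) (use m0 mr in auto)
  moreover have V: "((((D * a - c * d) - 0) + D * (e - a)) + (0 - (D * e + c * f))) = -c*(f + d)" for D a c d e f :: real
    by (simp add: algebra_simps)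
  ultimately show ?thesis by (metis V)
qed



definition upd :: "real^'n \<Rightarrow> 'n \<Rightarrow> real \<Rightarrow> real^'n" where
  "upd x i s = x + (s - x$i) *\<^sub>R axis i 1"

definition nrm :: "real^'n \<Rightarrow> real" where
  "nrm x = Max (range (\<lambda>k. \<bar>x$k\<bar>))"

definition mo :: "'n \<Rightarrow> real^'n \<Rightarrow> real" where
  "mo i x = Max ((\<lambda>k. \<bar>x$k\<bar>) ` (UNIV - {i}))"

lemma upd_nth[simp]: "upd x i s $ k = (if k = i then s else x $ k)"
  by (simp add: upd_def axis_def)

lemma upd_upd[simp]: "upd (upd x i s) i t = upd x i t"
  by (simp add: vec_eq_iff)

lemma upd_self[simp]: "upd x i (x$i) = x"
  by (simp add: vec_eq_iff)

lemma cube_cbox: "cube r = cbox (- (\<chi> k. r)) (\<chi> k. r)"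
proof -
  have *: "\<And>x::real. \<bar>x\<bar> \<le> r \<longleftrightarrow> -r \<le> x \<and> x \<le> r" by auto
  show ?thesis unfolding cube_def set_eq_iff mem_box_cart * by simp
qed

lemma upd_in_cube: "x \<in> cube r \<Longrightarrow> \<bar>s\<bar> \<le> r \<Longrightarrow> upd x i s \<in> cube r"
  by (auto simp: cube_def)

lemma card_ge2_other: assumes "CARD('n) \<ge> 2" shows "\<exists>j::'n. j \<noteq> i"
proof (rule ccontr)
  assume "\<not> ?thesis"
  then have "(UNIV::'n set) = {i}" by auto
  then have "card (UNIV::'n set) = card {i}" by (simp only:)
  then have "CARD('n) = 1" by simp
  with assms show False by simp
qed

lemma mo_ne: assumes "CARD('n) \<ge> 2" shows "(UNIV - {i::'n}) \<noteq> {}"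
proof -
  from card_ge2_other[OF assms] obtain j where "j \<noteq> i" by blast
  then show ?thesis by blast
qed

lemma mo_upd[simp]: "mo i (upd x i s) = mo i x"
  unfolding mo_def by (intro arg_cong[where f=Max]) auto

lemma mo_ge: "k \<noteq> i \<Longrightarrow> \<bar>x$k\<bar> \<le> mo i x"
  unfolding mo_def by (rule Max_ge) auto

lemma mo_attained: fixes i :: "'n::finite" assumes "CARD('n) \<ge> 2" shows "\<exists>j. j \<noteq> i \<and> mo i x = \<bar>x$j\<bar>"
proof -
  have "mo i x \<in> (\<lambda>k. \<bar>x$k\<bar>) ` (UNIV - {i})"
    unfolding mo_def by (rule Max_in) (use mo_ne[OF assms] in auto)
  then show ?thesis by auto
qed

lemma mo_nonneg: fixes i :: "'n::finite" assumes "CARD('n) \<ge> 2" shows "0 \<le> mo i x"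
  using mo_attained[OF assms, of i x] by auto

lemma mo_le: fixes i :: "'n::finite" assumes "CARD('n) \<ge> 2" "x \<in> cube r" shows "mo i x \<le> r"
  using mo_attained[OF assms(1), of i x] assms(2) by (auto simp: cube_def)

lemma mo_lip: fixes i :: "'n::finite" assumes "CARD('n) \<ge> 2" shows "mo i x \<le> mo i y + norm (x - y)"
proof -
  obtain j where j: "j \<noteq> i" "mo i x = \<bar>x$j\<bar>" using mo_attained[OF assms] by blast
  have "\<bar>x$j\<bar> \<le> \<bar>y$j\<bar> + \<bar>(x - y)$j\<bar>" by simp
  also have "\<dots> \<le> mo i y + norm (x - y)"
    using mo_ge[OF j(1), of y] component_le_norm_cart[of "x-y" j] by simp
  finally show ?thesis using j by simp
qed

lemma nrm_ge: "\<bar>x$k\<bar> \<le> nrm x"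
  unfolding nrm_def by (rule Max_ge) auto

lemma nrm_attained: "\<exists>j. nrm x = \<bar>x$j\<bar>"
proof -
  have "nrm x \<in> range (\<lambda>k. \<bar>x$k\<bar>)"
    unfolding nrm_def by (rule Max_in) auto
  then show ?thesis by auto
qed

lemma nrm_lip: "nrm x \<le> nrm y + norm (x - y)"
proof -
  obtain j where j: "nrm x = \<bar>x$j\<bar>" using nrm_attained by blast
  have "\<bar>x$j\<bar> \<le> \<bar>y$j\<bar> + \<bar>(x - y)$j\<bar>" by simp
  also have "\<dots> \<le> nrm y + norm (x - y)"
    using nrm_ge[of y j] component_le_norm_cart[of "x-y" j] by simp
  finally show ?thesis using j by simp
qed

lemma lip_cont:
  fixes f :: "'a::real_normed_vector \<Rightarrow> real"
  assumes "\<And>x y. f x \<le> f y + norm (x - y)"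
  shows "continuous_on S f"
proof -
  have "\<bar>f x - f y\<bar> \<le> norm (x - y)" for x y
    using assms[of x y] assms[of y x] by (auto simp: norm_minus_commute)
  then show ?thesis
    unfolding continuous_on_iff dist_real_def dist_norm
    by (metis order_le_less_trans)
qed

lemma mo_cont: fixes i :: "'n::finite" shows "CARD('n) \<ge> 2 \<Longrightarrow> continuous_on S (mo i)"
  by (rule lip_cont) (rule mo_lip)

lemma nrm_cont: "continuous_on S (nrm :: real^'n \<Rightarrow> real)"
  by (rule lip_cont) (rule nrm_lip)

lemma nrm_upd: fixes i :: "'n::finite" assumes "CARD('n) \<ge> 2" shows "nrm (upd x i s) = max \<bar>s\<bar> (mo i x)"
proof (rule antisym)
  obtain j where j: "nrm (upd x i s) = \<bar>upd x i s $ j\<bar>" using nrm_attained by blast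
  show "nrm (upd x i s) \<le> max \<bar>s\<bar> (mo i x)"
    using j mo_ge[of j i x] by (cases "j = i") auto
  obtain k where k: "k \<noteq> i" "mo i x = \<bar>x$k\<bar>" using mo_attained[OF assms] by blast
  show "max \<bar>s\<bar> (mo i x) \<le> nrm (upd x i s)"
    using nrm_ge[of "upd x i s" i] nrm_ge[of "upd x i s" k] k by auto
qed

lemma diag_point: fixes i :: "'n::finite" assumes "CARD('n) \<ge> 2" "x \<in> cube r" "\<bar>t\<bar> = mo i x"
  shows "upd x i t \<in> diagset r"
proof -
  obtain j where j: "j \<noteq> i" "mo i x = \<bar>x$j\<bar>" using mo_attained[OF assms(1)] by blast
  have "upd x i t \<in> cube r"
    using assms mo_le[OF assms(1,2), of i] by (intro upd_in_cube) auto
  moreover have "\<forall>k. k \<noteq> i \<and> k \<noteq> j \<longrightarrow> \<bar>upd x i t $ k\<bar> \<le> \<bar>upd x i t $ i\<bar>"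
    using mo_ge[of _ i x] assms(3) by auto
  ultimately show ?thesis unfolding diagset_def
    using j assms(3) by (intro CollectI conjI exI[of _ i] exI[of _ j]) auto
qed

lemma upd_cont: "continuous_on S (\<lambda>p. upd (fst p) i (snd p))"
  unfolding upd_def by (intro continuous_intros)



definition tau :: "'n \<Rightarrow> (real^'n) \<times> real \<Rightarrow> (real^'n) \<times> real" where
  "tau i p = (upd (fst p) i (snd p), fst p $ i)"

lemma tau_tau[simp]: "tau i (tau i p) = p"
  by (cases p) (simp add: tau_def vec_eq_iff)

lemma tau_cont: "continuous (at p) (tau i)"
  unfolding tau_def upd_def by (intro continuous_intros)

lemma cart_cbox_empty: "cbox a (b::real^'n) = {} \<longleftrightarrow> (\<exists>k. b$k < a$k)"
proof
  assume "cbox a b = {}"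
  then have "a \<notin> cbox a b" by simp
  then show "\<exists>k. b$k < a$k" by (auto simp: mem_box_cart not_le)
next
  assume "\<exists>k. b$k < a$k"
  then obtain k where k: "b$k < a$k" by blast
  show "cbox a b = {}"
  proof (rule equals0I)
    fix x assume "x \<in> cbox a b"
    then have "a$k \<le> x$k" "x$k \<le> b$k" by (auto simp: mem_box_cart)
    with k show False by simp
  qed
qed

lemma content_cart: "Henstock_Kurzweil_Integration.content (cbox a (b::real^'n)) = (if \<forall>k. a$k \<le> b$k then \<Prod>k\<in>UNIV. (b$k - a$k) else 0)"
proof (cases "\<forall>k. a$k \<le> b$k")
  case True
  then have "cbox a b \<noteq> {}" unfolding cart_cbox_empty by (auto simp: not_less)
  then show ?thesis using True by (simp add: content_cbox_cart)
next
  case False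
  then have "cbox a b = {}" unfolding cart_cbox_empty by (auto simp: not_le)
  then show ?thesis by (subst if_not_P[OF False]) simp
qed

lemma tau_box: fixes i :: "'n::finite" and u1 v1 :: "real^'n" shows "tau i ` cbox (u1,u2) (v1,v2) = cbox (upd u1 i u2, u1$i) (upd v1 i v2, v1$i)"
proof (rule set_eqI)
  fix q :: "(real^'n) \<times> real"
  obtain y t where q: "q = (y,t)" by (cases q)
  show "q \<in> tau i ` cbox (u1,u2) (v1,v2) \<longleftrightarrow> q \<in> cbox (upd u1 i u2, u1$i) (upd v1 i v2, v1$i)"
  proof
    assume "q \<in> tau i ` cbox (u1,u2) (v1,v2)"
    then obtain x s where "(x,s) \<in> cbox (u1,u2) (v1,v2)" "q = tau i (x,s)" by auto
    then show "q \<in> cbox (upd u1 i u2, u1$i) (upd v1 i v2, v1$i)"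
      by (auto simp: tau_def mem_box_cart)
  next
    assume A: "q \<in> cbox (upd u1 i u2, u1$i) (upd v1 i v2, v1$i)"
    have yk: "\<And>k. (upd u1 i u2)$k \<le> y$k \<and> y$k \<le> (upd v1 i v2)$k" and t: "u1$i \<le> t" "t \<le> v1$i"
      using A unfolding q cbox_Pair_iff mem_box_cart box_real by auto
    have yi: "u2 \<le> y$i" "y$i \<le> v2" using yk[of i] by simp_all
    have "upd y i t \<in> cbox u1 v1"
      unfolding mem_box_cart
    proof
      fix k show "u1 $ k \<le> upd y i t $ k \<and> upd y i t $ k \<le> v1 $ k"
        using yk[of k] t by (cases "k = i") auto
    qed
    then have "tau i q \<in> cbox (u1,u2) (v1,v2)"
      using yi unfolding q tau_def by simp
    moreover have "q = tau i (tau i q)" by simp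
    ultimately show "q \<in> tau i ` cbox (u1,u2) (v1,v2)" by blast
  qed
qed

lemma prod_upd: "(\<Prod>k\<in>UNIV. (upd b i t $ k - upd a i s $ k)) = (t - s) * (\<Prod>k\<in>UNIV-{i}. (b$k - a$k))"
proof -
  have "(\<Prod>k\<in>UNIV. (upd b i t $ k - upd a i s $ k)) = (upd b i t $ i - upd a i s $ i) * (\<Prod>k\<in>UNIV-{i}. (upd b i t $ k - upd a i s $ k))"
    by (rule prod.remove) auto
  also have "(\<Prod>k\<in>UNIV-{i}. (upd b i t $ k - upd a i s $ k)) = (\<Prod>k\<in>UNIV-{i}. (b$k - a$k))"
    by (rule prod.cong) auto
  finally show ?thesis by simp
qed

lemma all_upd: "(\<forall>k. upd a i s $ k \<le> upd b i t $ k) \<longleftrightarrow> s \<le> t \<and> (\<forall>k. k \<noteq> i \<longrightarrow> a$k \<le> b$k)"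
proof
  assume A: "\<forall>k. upd a i s $ k \<le> upd b i t $ k"
  show "s \<le> t \<and> (\<forall>k. k \<noteq> i \<longrightarrow> a$k \<le> b$k)"
  proof (intro conjI allI impI)
    show "s \<le> t" using A[rule_format, of i] by simp
    fix k assume "k \<noteq> i" then show "a$k \<le> b$k" using A[rule_format, of k] by simp
  qed
next
  assume "s \<le> t \<and> (\<forall>k. k \<noteq> i \<longrightarrow> a$k \<le> b$k)"
  then show "\<forall>k. upd a i s $ k \<le> upd b i t $ k" by auto
qed

lemma all_split: "(\<forall>k. (a::real^'n)$k \<le> b$k) \<longleftrightarrow> a$i \<le> b$i \<and> (\<forall>k. k \<noteq> i \<longrightarrow> a$k \<le> b$k)"
  by auto

lemma prod_split: "(\<Prod>k\<in>UNIV. ((b::real^'n)$k - a$k)) = (b$i - a$i) * (\<Prod>k\<in>UNIV-{i}. (b$k - a$k))"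
  by (rule prod.remove) auto

lemma if_prod_swap: "(if p2 \<and> qq then D*P else 0) * (if p1 then C else (0::real)) = (if p1 \<and> qq then C*P else 0) * (if p2 then D else 0)"
  by auto

lemma tau_content: "Henstock_Kurzweil_Integration.content (tau i ` cbox u v) = Henstock_Kurzweil_Integration.content (cbox u v)"
proof -
  obtain u1 u2 v1 v2 where uv: "u = (u1,u2)" "v = (v1,v2)" by (cases u, cases v)
  show ?thesis
    unfolding uv tau_box content_Pair box_real content_real_if content_cart all_upd prod_upd
    unfolding all_split[of u1 v1 i] prod_split[of v1 u1 i]
    by (rule if_prod_swap)
qed

lemma tau_img_box: "\<exists>w z. tau i ` cbox u v = cbox w z"
  by (cases u, cases v) (auto simp: tau_box)

lemma avg_cont:
  fixes g :: "real^'n \<Rightarrow> real" and i :: 'n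
  assumes g: "continuous_on (cube r) g" and r: "0 \<le> r"
  shows "(\<lambda>x. integral {-r..r} (\<lambda>s. g (upd x i s))) integrable_on cube r"
    and "integral (cube r) (\<lambda>x. integral {-r..r} (\<lambda>s. g (upd x i s))) = 2*r * integral (cube r) g"
proof -
  define a :: "real^'n" where "a = - (\<chi> k. r)"
  define b :: "real^'n" where "b = (\<chi> k. r)"
  have Q: "cube r = cbox a b" by (simp add: cube_cbox a_def b_def)
  define K where "K = cbox (a, -r) (b, r)"
  have K: "K = cube r \<times> {-r..r}" by (simp add: K_def cbox_Pair_eq Q)
  have img: "upd (fst p) i (snd p) \<in> cube r" if "p \<in> K" for p
    using that unfolding K by (auto intro!: upd_in_cube simp: abs_le_iff)
  have Fc: "continuous_on K (\<lambda>p. g (upd (fst p) i (snd p)))"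
    by (rule continuous_on_compose2[OF g upd_cont]) (use img in auto)
  have Fc': "continuous_on (cube r \<times> cbox (-r) r) (\<lambda>(x, s). g (upd x i s))"
    using Fc unfolding K by (simp add: split_def)
  have inner_cont: "continuous_on (cube r) (\<lambda>x. integral (cbox (-r) r) (\<lambda>s. g (upd x i s)))"
    by (rule integral_continuous_on_param[OF Fc'])
  then show "(\<lambda>x. integral {-r..r} (\<lambda>s. g (upd x i s))) integrable_on cube r"
    unfolding Q by (simp add: integrable_continuous)
  define F where "F = (\<lambda>p. g (upd (fst p) i (snd p)))"
  define G where "G = (\<lambda>p::(real^'n)\<times>real. g (fst p))"
  have P1: "integral (cbox (a, -r) (b, r)) F = integral (cbox a b) (\<lambda>x. integral (cbox (-r) r) (\<lambda>y. F (x, y)))"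
    by (rule integral_prod_continuous) (use Fc in \<open>simp only: K_def F_def\<close>)
  have E1: "integral K F = integral (cube r) (\<lambda>x. integral {-r..r} (\<lambda>s. g (upd x i s)))"
    unfolding K_def P1 by (simp add: F_def Q)
  have Gc: "continuous_on K G"
    unfolding G_def by (rule continuous_on_compose2[OF g continuous_on_fst]) (use K in auto)
  define I where "I = integral K G"
  have GI: "(G has_integral I) (cbox (a, -r) (b, r))"
    using Gc unfolding K_def I_def by (simp add: integrable_continuous integrable_integral)
  have P2: "integral (cbox (a, -r) (b, r)) G = integral (cbox a b) (\<lambda>x. integral (cbox (-r) r) (\<lambda>y. G (x, y)))"
    by (rule integral_prod_continuous) (use Gc in \<open>simp only: K_def\<close>)
  have E2: "I = 2*r * integral (cube r) g"
  proof -
    have "I = integral (cube r) (\<lambda>x. integral {-r..r} (\<lambda>s. g x))"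
      unfolding I_def K_def P2 by (simp add: G_def Q)
    also have "\<dots> = integral (cube r) (\<lambda>x. (2*r) * g x)"
      using r by (intro integral_cong) simp
    also have "\<dots> = 2*r * integral (cube r) g"
      using integral_cmul[where c="2*r" and f=g and S="cube r"] by simp
    finally show ?thesis .
  qed
  have ua: "upd a i (-r) = a" "upd b i r = b" "a$i = -r" "b$i = r"
    by (simp_all add: vec_eq_iff a_def b_def)
  have tauK: "tau i ` cbox (a, -r) (b, r) = cbox (a, -r) (b, r)"
    unfolding tau_box ua ..
  have "((\<lambda>p. G (tau i p)) has_integral (1/1) *\<^sub>R I) (tau i ` cbox (a, -r) (b, r))"
  proof (rule has_integral_twiddle[where g="tau i" and h="tau i", OF _ tau_tau tau_tau tau_cont tau_img_box tau_img_box])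
    show "(0::real) < 1" by simp
    show "\<And>u v. Henstock_Kurzweil_Integration.content (tau i ` cbox u v) = 1 * Henstock_Kurzweil_Integration.content (cbox u v)"
      by (simp only: tau_content mult_1)
    show "(G has_integral I) (cbox (a, - r) (b, r))"
      by (rule GI)
  qed
  moreover have "(\<lambda>p. G (tau i p)) = F"
    by (simp add: G_def F_def tau_def)
  ultimately have "(F has_integral I) K"
    unfolding tauK K_def by simp
  then have "integral K F = I"
    by (rule integral_unique)
  then show "integral (cube r) (\<lambda>x. integral {-r..r} (\<lambda>s. g (upd x i s))) = 2*r * integral (cube r) g"
    using E1 E2 by simp
qed



definition ch :: "nat \<Rightarrow> real \<Rightarrow> real" where
  "ch k t = min 1 (max 0 (1 + real (Suc k) * t))"

lemma ch_bounds: "0 \<le> ch k t" "ch k t \<le> 1"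
  by (auto simp: ch_def)

lemma ch_cont[continuous_intros]: "continuous_on S f \<Longrightarrow> continuous_on S (\<lambda>x. ch k (f x))"
  unfolding ch_def by (intro continuous_intros)

lemma ch_lim: "(\<lambda>k. ch k t) \<longlonglongrightarrow> (if 0 \<le> t then 1 else 0)"
proof (cases "0 \<le> t")
  case True
  then have "ch k t = 1" for k by (simp add: ch_def)
  then show ?thesis using True by simp
next
  case False
  obtain N :: nat where N: "1 / (-t) < real N" using reals_Archimedean2 by blast
  have "ch k t = 0" if "k \<ge> N" for k
  proof -
    have "1 < real N * (-t)" using N False by (simp add: field_simps)
    also have "\<dots> \<le> real (Suc k) * (-t)" using that False
      by (intro mult_right_mono) auto
    finally have "1 + real (Suc k) * t < 0" by simp
    then show ?thesis by (simp add: ch_def)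
  qed
  then have "\<forall>\<^sub>F k in sequentially. ch k t = 0"
    by (auto simp: eventually_sequentially)
  then have "(\<lambda>k. ch k t) \<longlonglongrightarrow> 0"
    by (rule tendsto_eventually)
  then show ?thesis using False by simp
qed

lemma mul_bd: fixes c a B :: real assumes "0 \<le> c" "c \<le> 1" "\<bar>a\<bar> \<le> B" shows "\<bar>c * a\<bar> \<le> B"
proof -
  have "\<bar>c * a\<bar> = c * \<bar>a\<bar>" using assms(1) by (simp add: abs_mult)
  also have "\<dots> \<le> 1 * \<bar>a\<bar>" using assms(2) by (intro mult_right_mono) auto
  finally show ?thesis using assms(3) by simp
qed

lemma cont_bound:
  fixes u :: "real^'n \<Rightarrow> real"
  assumes "continuous_on (cube r) u"
  obtains B where "0 \<le> B" "\<And>x. x \<in> cube r \<Longrightarrow> \<bar>u x\<bar> \<le> B"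
proof -
  have "compact (u ` cube r)"
    by (rule compact_continuous_image[OF assms]) (simp add: cube_cbox)
  then obtain B where "\<forall>y\<in>u ` cube r. norm y \<le> B"
    using compact_imp_bounded bounded_iff by metis
  then show ?thesis using that[of "max 0 B"] by fastforce
qed

lemma avg_ind:
  fixes u :: "real^'n \<Rightarrow> real" and i :: 'n
  assumes n2: "CARD('n) \<ge> 2" and u: "continuous_on (cube r) u" and r: "0 \<le> r"
  shows "(\<lambda>x. if mo i x \<le> \<bar>x$i\<bar> then u x else 0) integrable_on cube r"
    and "(\<lambda>x. integral {-r..r} (\<lambda>s. if mo i x \<le> \<bar>s\<bar> then u (upd x i s) else 0)) integrable_on cube r"
    and "integral (cube r) (\<lambda>x. integral {-r..r} (\<lambda>s. if mo i x \<le> \<bar>s\<bar> then u (upd x i s) else 0))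
         = 2*r * integral (cube r) (\<lambda>x. if mo i x \<le> \<bar>x$i\<bar> then u x else 0)"
proof -
  obtain B where B0: "0 \<le> B" and B: "\<And>x. x \<in> cube r \<Longrightarrow> \<bar>u x\<bar> \<le> B"
    using cont_bound[OF u] by blast
  define gk where "gk k y = ch k (\<bar>y$i\<bar> - mo i y) * u y" for k y
  define ind where "ind = (\<lambda>y. if mo i y \<le> \<bar>y$i\<bar> then u y else 0)"
  define Ik where "Ik k x = integral {-r..r} (\<lambda>s. ch k (\<bar>s\<bar> - mo i x) * u (upd x i s))" for k x
  define I where "I = (\<lambda>x. integral {-r..r} (\<lambda>s. if mo i x \<le> \<bar>s\<bar> then u (upd x i s) else 0))"
  have gkc: "continuous_on (cube r) (gk k)" for k
    unfolding gk_def by (intro continuous_intros mo_cont n2 u)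
  have gk_upd: "gk k (upd x i s) = ch k (\<bar>s\<bar> - mo i x) * u (upd x i s)" for k x s
    by (simp add: gk_def)
  have A1: "Ik k integrable_on cube r" for k
    using avg_cont(1)[OF gkc r, of k i] unfolding gk_upd Ik_def .
  have A2: "integral (cube r) (Ik k) = 2*r * integral (cube r) (gk k)" for k
    using avg_cont(2)[OF gkc r, of k i] unfolding gk_upd Ik_def .
  have Uc: "continuous_on {-r..r} (\<lambda>s. u (upd x i s))" if x: "x \<in> cube r" for x
  proof -
    have "continuous_on {-r..r} (\<lambda>s. upd x i s)" unfolding upd_def by (intro continuous_intros)
    moreover have "(\<lambda>s. upd x i s) ` {-r..r} \<subseteq> cube r" using x by (auto intro!: upd_in_cube)
    ultimately show ?thesis by (rule continuous_on_compose2[OF u])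
  qed
  have ch_conv: "(\<lambda>k. ch k (\<bar>s\<bar> - m) * c) \<longlonglongrightarrow> (if m \<le> \<bar>s\<bar> then c else 0)" for s m c
    using tendsto_mult_right[OF ch_lim[of "\<bar>s\<bar> - m"], of c] by (simp split: if_splits)
  have inner: "I integrable_on cube r \<and> (\<lambda>k. integral (cube r) (Ik k)) \<longlonglongrightarrow> integral (cube r) I"
  proof -
    have conv: "(\<lambda>k. Ik k x) \<longlonglongrightarrow> I x" if x: "x \<in> cube r" for x
    proof -
      have fi: "(\<lambda>s. ch k (\<bar>s\<bar> - mo i x) * u (upd x i s)) integrable_on {-r..r}" for k
        by (intro integrable_continuous_real continuous_intros Uc x)
      have bd: "norm (ch k (\<bar>s\<bar> - mo i x) * u (upd x i s)) \<le> B" if "s \<in> {-r..r}" for k s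
      proof -
        have "\<bar>u (upd x i s)\<bar> \<le> B" using that x by (intro B upd_in_cube) auto
        then show ?thesis using ch_bounds[of k "\<bar>s\<bar> - mo i x"] by (simp add: mul_bd)
      qed
      show ?thesis
        using dominated_convergence(2)[OF fi integrable_const_ivl[of B "-r" r] bd ch_conv]
        unfolding Ik_def I_def by simp
    qed
    have bd: "norm (Ik k x) \<le> B * (2*r)" if x: "x \<in> cube r" for k x
    proof -
      have "norm (Ik k x) \<le> B * (r - (-r))"
        unfolding Ik_def
      proof (rule integral_bound)
        show "- r \<le> r" using r by simp
        show "continuous_on {- r..r} (\<lambda>s. ch k (\<bar>s\<bar> - mo i x) * u (upd x i s))"
          by (intro continuous_intros Uc x)
        fix s assume "s \<in> {-r..r}"
        then have "\<bar>u (upd x i s)\<bar> \<le> B" using x by (intro B upd_in_cube) auto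
        then show "norm (ch k (\<bar>s\<bar> - mo i x) * u (upd x i s)) \<le> B"
          using ch_bounds[of k "\<bar>s\<bar> - mo i x"] by (simp add: mul_bd)
      qed
      then show ?thesis by simp
    qed
    have ci: "(\<lambda>x. B * (2*r)) integrable_on cube r"
      unfolding cube_cbox by (rule integrable_const)
    show ?thesis
      using dominated_convergence[OF A1 ci bd conv] by simp
  qed
  have outer: "ind integrable_on cube r \<and> (\<lambda>k. integral (cube r) (gk k)) \<longlonglongrightarrow> integral (cube r) ind"
  proof -
    have gi: "gk k integrable_on cube r" for k
      using gkc[of k] by (simp add: cube_cbox integrable_continuous)
    have bd: "norm (gk k x) \<le> B" if "x \<in> cube r" for k x
      using B[OF that] ch_bounds[of k "\<bar>x$i\<bar> - mo i x"] unfolding gk_def by (simp add: mul_bd)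
    have ci: "(\<lambda>x. B) integrable_on cube r"
      unfolding cube_cbox by (rule integrable_const)
    have conv: "(\<lambda>k. gk k x) \<longlonglongrightarrow> ind x" for x
      using ch_conv[of "x$i" "mo i x" "u x"] unfolding gk_def ind_def by simp
    show ?thesis
      using dominated_convergence[OF gi ci bd conv] by simp
  qed
  have "ind integrable_on cube r" using outer by simp
  then show "(\<lambda>x. if mo i x \<le> \<bar>x$i\<bar> then u x else 0) integrable_on cube r" unfolding ind_def .
  have "I integrable_on cube r" using inner by simp
  then show "(\<lambda>x. integral {-r..r} (\<lambda>s. if mo i x \<le> \<bar>s\<bar> then u (upd x i s) else 0)) integrable_on cube r"
    unfolding I_def .
  have L1: "(\<lambda>k. integral (cube r) (Ik k)) \<longlonglongrightarrow> integral (cube r) I" using inner by simp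
  have "(\<lambda>k. 2*r * integral (cube r) (gk k)) \<longlonglongrightarrow> 2*r * integral (cube r) ind"
    using outer by (intro tendsto_mult_left) simp
  then have L2: "(\<lambda>k. integral (cube r) (Ik k)) \<longlonglongrightarrow> 2*r * integral (cube r) ind"
    unfolding A2 .
  have "integral (cube r) I = 2*r * integral (cube r) ind"
    using LIMSEQ_unique[OF L1 L2] .
  then show "integral (cube r) (\<lambda>x. integral {-r..r} (\<lambda>s. if mo i x \<le> \<bar>s\<bar> then u (upd x i s) else 0))
         = 2*r * integral (cube r) (\<lambda>x. if mo i x \<le> \<bar>x$i\<bar> then u x else 0)"
    unfolding I_def ind_def .
qed



lemma upd_has_derivative: "((\<lambda>s. upd x i s) has_derivative (\<lambda>t. t *\<^sub>R axis i 1)) (at s)"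
  unfolding upd_def by (auto intro!: derivative_eq_intros simp: algebra_simps)

lemma line_deriv:
  assumes "(u has_derivative (\<lambda>v. Du \<bullet> v)) (at (upd x i s))"
  shows "((\<lambda>s. u (upd x i s)) has_real_derivative (Du $ i)) (at s)"
proof -
  have "((\<lambda>s. u (upd x i s)) has_derivative (\<lambda>t. Du \<bullet> (t *\<^sub>R axis i 1))) (at s)"
    by (rule has_derivative_compose[OF upd_has_derivative assms])
  moreover have "(\<lambda>t. Du \<bullet> (t *\<^sub>R axis i 1)) = (*) (Du $ i)"
    by (simp add: fun_eq_iff inner_axis)
  ultimately show ?thesis by (simp add: has_field_derivative_def)
qed

lemma line_deriv2:
  fixes D :: "real^'n \<Rightarrow> real^'n"
  assumes "(D has_derivative (\<lambda>v. H *v v)) (at (upd x i s))"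
  shows "((\<lambda>s. D (upd x i s) $ i) has_real_derivative (H $ i $ i)) (at s)"
proof -
  have "((\<lambda>s. D (upd x i s)) has_derivative (\<lambda>t. H *v (t *\<^sub>R axis i 1))) (at s)"
    by (rule has_derivative_compose[OF upd_has_derivative assms])
  then have "((\<lambda>s. D (upd x i s) $ i) has_derivative (\<lambda>t. (H *v (t *\<^sub>R axis i 1)) $ i)) (at s)"
    by (rule bounded_linear.has_derivative[OF bounded_linear_vec_nth])
  moreover have "(\<lambda>t. (H *v (t *\<^sub>R axis i 1)) $ i) = (*) (H $ i $ i)"
    by (simp add: fun_eq_iff matrix_vector_mult_scaleR matrix_vector_mult_basis column_def)
  ultimately show ?thesis by (simp add: has_field_derivative_def)
qed

lemma sum_ind:
  fixes x :: "real^'n"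
  assumes n2: "CARD('n) \<ge> 2" and d: "\<forall>j k. j \<noteq> k \<longrightarrow> \<bar>x$j\<bar> \<noteq> \<bar>x$k\<bar>"
  shows "(\<Sum>i\<in>UNIV. (if mo i x \<le> \<bar>x$i\<bar> then c else 0)) = c"
proof -
  obtain i0 where i0: "nrm x = \<bar>x$i0\<bar>" using nrm_attained by blast
  have "(if mo i x \<le> \<bar>x$i\<bar> then c else 0) = (if i = i0 then c else 0)" for i
  proof (cases "i = i0")
    case True
    obtain j where "j \<noteq> i" "mo i x = \<bar>x$j\<bar>" using mo_attained[OF n2] by blast
    then have "mo i x \<le> \<bar>x$i0\<bar>" using nrm_ge[of x j] i0 by simp
    then show ?thesis using True by simp
  next
    case False
    have "\<bar>x$i0\<bar> \<le> mo i x" using mo_ge[of i0 i x] False by simp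
    moreover have "\<bar>x$i\<bar> < \<bar>x$i0\<bar>" using nrm_ge[of x i] i0 d False by force
    ultimately show ?thesis using False by simp
  qed
  then show ?thesis by simp
qed

lemma neg_set:
  fixes N :: "(real^'n) set"
  defines "N \<equiv> \<Union> ((\<lambda>p. {x. (axis (fst p) 1 - axis (snd p) 1) \<bullet> x = 0} \<union> {x. (axis (fst p) 1 + axis (snd p) 1) \<bullet> x = (0::real)}) ` {p. fst p \<noteq> snd p})"
  shows "negligible N" and "x \<notin> N \<Longrightarrow> \<forall>j k. j \<noteq> k \<longrightarrow> \<bar>x$j\<bar> \<noteq> \<bar>x$k\<bar>"
proof -
  have ne: "axis j 1 - axis k 1 \<noteq> (0::real^'n)" "axis j 1 + axis k 1 \<noteq> (0::real^'n)" if "j \<noteq> k" for j k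
    using that by (auto simp: vec_eq_iff axis_def dest!: spec[of _ j])
  show "negligible N" unfolding N_def
    by (intro negligible_Union finite_imageI) (auto intro!: negligible_Un negligible_hyperplane simp: ne axis_eq_axis)
  assume "x \<notin> N"
  then have h: "j \<noteq> k \<Longrightarrow> x$j - x$k \<noteq> 0 \<and> x$j + x$k \<noteq> 0" for j k
    unfolding N_def by (auto simp: inner_diff_left inner_add_left inner_axis')
  show "\<forall>j k. j \<noteq> k \<longrightarrow> \<bar>x$j\<bar> \<noteq> \<bar>x$k\<bar>"
  proof (intro allI impI)
    fix j k :: 'n assume "j \<noteq> k"
    from h[OF this] show "\<bar>x$j\<bar> \<noteq> \<bar>x$k\<bar>" by (auto simp: abs_if split: if_splits)
  qed
qed



lemma neg_ex:
  obtains N :: "(real^'n) set" where "negligible N" "\<And>x. x \<notin> N \<Longrightarrow> \<forall>j k. j \<noteq> k \<longrightarrow> \<bar>x$j\<bar> \<noteq> \<bar>x$k\<bar>"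
proof -
  define N :: "(real^'n) set" where "N \<equiv> \<Union> ((\<lambda>p. {x. (axis (fst p) 1 - axis (snd p) 1) \<bullet> x = 0} \<union> {x. (axis (fst p) 1 + axis (snd p) 1) \<bullet> x = (0::real)}) ` {p. fst p \<noteq> snd p})"
  have "negligible N" unfolding N_def by (rule neg_set(1))
  moreover have "\<And>x. x \<notin> N \<Longrightarrow> \<forall>j k. j \<noteq> k \<longrightarrow> \<bar>x$j\<bar> \<noteq> \<bar>x$k\<bar>"
    unfolding N_def by (rule neg_set(2))
  ultimately show ?thesis by (rule that)
qed

lemma core:
  fixes u :: "real^'n \<Rightarrow> real" and Du :: "real^'n \<Rightarrow> real^'n" and Hu :: "real^'n \<Rightarrow> real^'n^'n"
  assumes n2: "CARD('n) \<ge> 2" and r: "0 < r" and U: "open U" and QU: "cube r \<subseteq> U"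
    and du: "\<forall>x\<in>U. (u has_derivative (\<lambda>v. Du x \<bullet> v)) (at x)"
    and d2: "\<forall>x\<in>U. (Du has_derivative (\<lambda>v. Hu x *v v)) (at x)"
    and hc: "continuous_on U Hu"
    and lap: "\<forall>x\<in>U. (\<Sum>i\<in>UNIV. Hu x $ i $ i) = 0"
    and pos: "\<forall>x\<in>diagset r. 0 \<le> u x"
  shows "0 \<le> integral (cube r) u"
proof -
  have r0: "0 \<le> r" using r by simp
  have ucU: "continuous_on U u"
  proof (rule continuous_at_imp_continuous_on, rule ballI)
    fix x assume "x \<in> U"
    then show "isCont u x" by (rule has_derivative_continuous[OF du[rule_format]])
  qed
  have uc: "continuous_on (cube r) u" using continuous_on_subset[OF ucU QU] .
  have hcQ: "continuous_on (cube r) Hu" using continuous_on_subset[OF hc QU] .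
  have uint: "u integrable_on cube r" using uc by (simp add: cube_cbox integrable_continuous)
  define w where "w = (\<lambda>y::real^'n. (r - nrm y)^2/2)"
  define g where "g = (\<lambda>(i::'n) (y::real^'n). w y * Hu y $ i $ i)"
  define P where "P = (\<lambda>(i::'n) (x::real^'n). integral {-r..r} (\<lambda>s. g i (upd x i s)))"
  define J where "J = (\<lambda>(i::'n) (x::real^'n). integral {-r..r} (\<lambda>s. if mo i x \<le> \<bar>s\<bar> then u (upd x i s) else 0))"
  define ind where "ind = (\<lambda>(i::'n) (x::real^'n). if mo i x \<le> \<bar>x$i\<bar> then u x else 0)"
  have gc: "continuous_on (cube r) (g i)" for i
    unfolding g_def w_def by (intro continuous_intros nrm_cont hcQ) auto
  have gint: "g i integrable_on cube r" for i using gc[of i] by (simp add: cube_cbox integrable_continuous)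
  have Pint: "P i integrable_on cube r" for i
    using avg_cont(1)[OF gc r0, of i] unfolding P_def .
  have Pval: "integral (cube r) (P i) = 2*r * integral (cube r) (g i)" for i
    using avg_cont(2)[OF gc r0, of i] unfolding P_def .
  have indint: "ind i integrable_on cube r" for i
    using avg_ind(1)[OF n2 uc r0, of i] unfolding ind_def .
  have Jint: "J i integrable_on cube r" for i
    using avg_ind(2)[OF n2 uc r0, of i] unfolding J_def .
  have Jval: "integral (cube r) (J i) = 2*r * integral (cube r) (ind i)" for i
    using avg_ind(3)[OF n2 uc r0, of i] unfolding J_def ind_def .
  have JP: "J i x - P i x = (r - mo i x) * (u (upd x i (mo i x)) + u (upd x i (- mo i x)))"
    if x: "x \<in> cube r" for i x
  proof -
    define m where "m = mo i x"
    have m0: "0 \<le> m" and mr: "m \<le> r" using mo_nonneg[OF n2] mo_le[OF n2 x] by (auto simp: m_def)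
    have inU: "upd x i s \<in> U" if "s \<in> {-r..r}" for s
      using that x QU by (auto intro!: upd_in_cube)
    have D1: "((\<lambda>s. u (upd x i s)) has_real_derivative (Du (upd x i s) $ i)) (at s)" if "s \<in> {-r..r}" for s
      by (rule line_deriv) (use du inU[OF that] in blast)
    have D2: "((\<lambda>s. Du (upd x i s) $ i) has_real_derivative (Hu (upd x i s) $ i $ i)) (at s)" if "s \<in> {-r..r}" for s
      by (rule line_deriv2) (use d2 inU[OF that] in blast)
    have OD: "((\<lambda>s. (r - max \<bar>s\<bar> m)^2/2 * Hu (upd x i s) $ i $ i - (if m \<le> \<bar>s\<bar> then u (upd x i s) else 0))
       has_integral (-(r - m) * (u (upd x i m) + u (upd x i (-m))))) {-r..r}"
      by (rule one_d[OF m0 mr D1 D2])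
    have geq: "g i (upd x i s) = (r - max \<bar>s\<bar> m)^2/2 * Hu (upd x i s) $ i $ i" for s
      by (simp add: g_def w_def nrm_upd[OF n2] m_def)
    have gi: "(\<lambda>s. g i (upd x i s)) integrable_on {-r..r}"
    proof -
      have "continuous_on {-r..r} (\<lambda>s. upd x i s)" unfolding upd_def by (intro continuous_intros)
      moreover have "(\<lambda>s. upd x i s) ` {-r..r} \<subseteq> cube r" using x by (auto intro!: upd_in_cube)
      ultimately have "continuous_on {-r..r} (\<lambda>s. g i (upd x i s))" by (rule continuous_on_compose2[OF gc])
      then show ?thesis by (rule integrable_continuous_real)
    qed
    have OD': "((\<lambda>s. g i (upd x i s) - (if m \<le> \<bar>s\<bar> then u (upd x i s) else 0))
       has_integral (-(r - m) * (u (upd x i m) + u (upd x i (-m))))) {-r..r}"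
      using OD unfolding geq .
    have ii: "(\<lambda>s. if m \<le> \<bar>s\<bar> then u (upd x i s) else 0) integrable_on {-r..r}"
    proof -
      have "(\<lambda>s. g i (upd x i s) - (if m \<le> \<bar>s\<bar> then u (upd x i s) else 0)) integrable_on {-r..r}"
        using OD' by (rule has_integral_integrable)
      then have "(\<lambda>s. g i (upd x i s) - (g i (upd x i s) - (if m \<le> \<bar>s\<bar> then u (upd x i s) else 0))) integrable_on {-r..r}"
        by (rule integrable_diff[OF gi])
      then show ?thesis by simp
    qed
    have "P i x - J i x = -(r - m) * (u (upd x i m) + u (upd x i (-m)))"
      unfolding P_def J_def m_def[symmetric]
      using integral_diff[OF gi ii] integral_unique[OF OD'] by simp
    then show ?thesis unfolding m_def by (simp add: algebra_simps)
  qed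
  have Dnonneg: "0 \<le> J i x - P i x" if x: "x \<in> cube r" for i x
  proof -
    have "0 \<le> mo i x" using mo_nonneg[OF n2] .
    then have "upd x i (mo i x) \<in> diagset r" "upd x i (- mo i x) \<in> diagset r"
      using diag_point[OF n2 x, of "mo i x" i] diag_point[OF n2 x, of "- mo i x" i] by simp_all
    then have "0 \<le> u (upd x i (mo i x)) + u (upd x i (- mo i x))" using pos by (simp add: add_nonneg_nonneg)
    moreover have "0 \<le> r - mo i x" using mo_le[OF n2 x] by simp
    ultimately show ?thesis unfolding JP[OF x] by simp
  qed
  have JPle: "integral (cube r) (P i) \<le> integral (cube r) (J i)" for i
  proof -
    have "0 \<le> integral (cube r) (\<lambda>x. J i x - P i x)"
      by (rule integral_nonneg[OF integrable_diff[OF Jint Pint]]) (rule Dnonneg)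
    then show ?thesis using integral_diff[OF Jint Pint, of i] by simp
  qed
  have sumP: "(\<Sum>i\<in>UNIV. integral (cube r) (P i)) = 0"
  proof -
    have "(\<Sum>i\<in>UNIV. integral (cube r) (P i)) = 2*r * (\<Sum>i\<in>UNIV. integral (cube r) (g i))"
      by (simp add: Pval sum_distrib_left)
    also have "(\<Sum>i\<in>UNIV. integral (cube r) (g i)) = integral (cube r) (\<lambda>y. \<Sum>i\<in>UNIV. g i y)"
      by (rule integral_sum[symmetric]) (auto intro: gint)
    also have "\<dots> = 0"
    proof (rule integral_unique[OF has_integral_is_0])
      fix y :: "real^'n" assume "y \<in> cube r"
      then have "(\<Sum>i\<in>UNIV. Hu y $ i $ i) = 0" using lap QU by auto
      then show "(\<Sum>i\<in>UNIV. g i y) = 0" unfolding g_def by (simp add: sum_distrib_left[symmetric])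
    qed
    finally show ?thesis by simp
  qed
  have sumJ: "(\<Sum>i\<in>UNIV. integral (cube r) (J i)) = 2*r * integral (cube r) u"
  proof -
    have "(\<Sum>i\<in>UNIV. integral (cube r) (J i)) = 2*r * (\<Sum>i\<in>UNIV. integral (cube r) (ind i))"
      by (simp add: Jval sum_distrib_left)
    also have "(\<Sum>i\<in>UNIV. integral (cube r) (ind i)) = integral (cube r) (\<lambda>y. \<Sum>i\<in>UNIV. ind i y)"
      by (rule integral_sum[symmetric]) (auto intro: indint)
    also have "\<dots> = integral (cube r) u"
    proof -
      obtain N :: "(real^'n) set" where N: "negligible N" "\<And>x. x \<notin> N \<Longrightarrow> \<forall>j k. j \<noteq> k \<longrightarrow> \<bar>x$j\<bar> \<noteq> \<bar>x$k\<bar>"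
        using neg_ex by blast
      show ?thesis
      proof (rule integral_spike[OF N(1)])
        fix x :: "real^'n" assume "x \<in> cube r - N"
        then show "u x = (\<Sum>i\<in>UNIV. ind i x)"
          unfolding ind_def using sum_ind[OF n2 N(2), of x "u x"] by simp
      qed
    qed
    finally show ?thesis .
  qed
  have "2*r * integral (cube r) u \<ge> 0"
  proof -
    have "(\<Sum>i\<in>UNIV. integral (cube r) (P i)) \<le> (\<Sum>i\<in>UNIV. integral (cube r) (J i))"
      by (rule sum_mono) (rule JPle)
    then show ?thesis using sumP sumJ by simp
  qed
  then show ?thesis using r by (simp add: zero_le_mult_iff)
qed



theorem corollary2:
  fixes r :: real and f h :: "real^'n \<Rightarrow> real" and Df :: "real^'n \<Rightarrow> real^'n"
  assumes "CARD('n) \<ge> 2" and "r > 0"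
    and f_diff: "\<forall>x\<in>cube r. (f has_derivative (\<lambda>v. Df x \<bullet> v)) (at x within cube r)"
    and f_C1: "continuous_on (cube r) Df"
    and h_harm: "h \<in> harm_below (cube r) f"
    and h_eq: "\<forall>x\<in>diagset r. h x = f x"
    and h_grad: "\<forall>x\<in>diagset r. (h has_derivative (\<lambda>v. Df x \<bullet> v)) (at x)"
  shows "\<forall>ht \<in> harm_below (cube r) f.
           L1norm (cube r) (\<lambda>x. f x - h x) \<le> L1norm (cube r) (\<lambda>x. f x - ht x)"
proof
  fix ht assume ht_harm: "ht \<in> harm_below (cube r) f"
  have n2: "CARD('n) \<ge> 2" and r: "r > 0" by fact+
  have hf: "\<forall>x\<in>cube r. h x \<le> f x" and htf: "\<forall>x\<in>cube r. ht x \<le> f x"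
    using h_harm ht_harm by (auto simp: harm_below_def)
  obtain U1 Dh Hs where U1: "open U1" "cube r \<subseteq> U1"
    and dh: "\<forall>x\<in>U1. (h has_derivative (\<lambda>v. Dh x \<bullet> v)) (at x)"
    and d2h: "\<forall>x\<in>U1. (Dh has_derivative (\<lambda>v. Hs x *v v)) (at x)"
    and chs: "continuous_on U1 Hs"
    and lh: "\<forall>x\<in>U1. (\<Sum>i\<in>UNIV. Hs x $ i $ i) = 0"
    using h_harm unfolding harm_below_def harm_def harmonic_on_def by blast
  obtain U2 Dt Ht where U2: "open U2" "cube r \<subseteq> U2"
    and dt: "\<forall>x\<in>U2. (ht has_derivative (\<lambda>v. Dt x \<bullet> v)) (at x)"
    and d2t: "\<forall>x\<in>U2. (Dt has_derivative (\<lambda>v. Ht x *v v)) (at x)"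
    and cht: "continuous_on U2 Ht"
    and lt: "\<forall>x\<in>U2. (\<Sum>i\<in>UNIV. Ht x $ i $ i) = 0"
    using ht_harm unfolding harm_below_def harm_def harmonic_on_def by blast
  define U where "U = U1 \<inter> U2"
  have U: "open U" "cube r \<subseteq> U" using U1 U2 by (auto simp: U_def)
  have du: "\<forall>x\<in>U. ((\<lambda>x. h x - ht x) has_derivative (\<lambda>v. (Dh x - Dt x) \<bullet> v)) (at x)"
  proof
    fix x :: "real^'n" assume "x \<in> U"
    then have "((\<lambda>x. h x - ht x) has_derivative (\<lambda>v. Dh x \<bullet> v - Dt x \<bullet> v)) (at x)"
      using dh dt by (intro has_derivative_diff) (auto simp: U_def)
    moreover have "(\<lambda>v. Dh x \<bullet> v - Dt x \<bullet> v) = (\<lambda>v. (Dh x - Dt x) \<bullet> v)"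
      by (simp add: fun_eq_iff inner_diff_left)
    ultimately show "((\<lambda>x. h x - ht x) has_derivative (\<lambda>v. (Dh x - Dt x) \<bullet> v)) (at x)" by simp
  qed
  have d2: "\<forall>x\<in>U. ((\<lambda>x. Dh x - Dt x) has_derivative (\<lambda>v. (Hs x - Ht x) *v v)) (at x)"
  proof
    fix x :: "real^'n" assume "x \<in> U"
    then have "((\<lambda>x. Dh x - Dt x) has_derivative (\<lambda>v. Hs x *v v - Ht x *v v)) (at x)"
      using d2h d2t by (intro has_derivative_diff) (auto simp: U_def)
    moreover have "(\<lambda>v. Hs x *v v - Ht x *v v) = (\<lambda>v. (Hs x - Ht x) *v v)"
      by (simp add: fun_eq_iff matrix_vector_mult_diff_rdistrib)
    ultimately show "((\<lambda>x. Dh x - Dt x) has_derivative (\<lambda>v. (Hs x - Ht x) *v v)) (at x)" by simp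
  qed
  have hc: "continuous_on U (\<lambda>x. Hs x - Ht x)"
    unfolding U_def
    by (intro continuous_on_diff continuous_on_subset[OF chs] continuous_on_subset[OF cht]) auto
  have lap: "\<forall>x\<in>U. (\<Sum>i\<in>UNIV. (Hs x - Ht x) $ i $ i) = 0"
    using lh lt by (auto simp: U_def sum_subtractf)
  have pos: "\<forall>x\<in>diagset r. 0 \<le> h x - ht x"
  proof
    fix x :: "real^'n" assume x: "x \<in> diagset r"
    then have "x \<in> cube r" by (simp add: diagset_def)
    then show "0 \<le> h x - ht x" using h_eq x htf by auto
  qed
  have I0: "0 \<le> integral (cube r) (\<lambda>x. h x - ht x)"
    by (rule core[OF n2 r U du d2 hc lap pos])
  have fc: "continuous_on (cube r) f"
    unfolding continuous_on_eq_continuous_within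
    using f_diff has_derivative_continuous by blast
  have hcont: "continuous_on (cube r) h"
    by (rule continuous_at_imp_continuous_on, rule ballI, rule has_derivative_continuous)
       (use dh U1 in blast)
  have htcont: "continuous_on (cube r) ht"
    by (rule continuous_at_imp_continuous_on, rule ballI, rule has_derivative_continuous)
       (use dt U2 in blast)
  have fi: "f integrable_on cube r" using fc by (simp add: cube_cbox integrable_continuous)
  have hi: "h integrable_on cube r" using hcont by (simp add: cube_cbox integrable_continuous)
  have hti: "ht integrable_on cube r" using htcont by (simp add: cube_cbox integrable_continuous)
  have e1: "L1norm (cube r) (\<lambda>x. f x - h x) = integral (cube r) f - integral (cube r) h"
  proof -
    have "L1norm (cube r) (\<lambda>x. f x - h x) = integral (cube r) (\<lambda>x. f x - h x)"
      unfolding L1norm_def by (rule Henstock_Kurzweil_Integration.integral_cong) (use hf in auto)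
    then show ?thesis using integral_diff[OF fi hi] by simp
  qed
  have e2: "L1norm (cube r) (\<lambda>x. f x - ht x) = integral (cube r) f - integral (cube r) ht"
  proof -
    have "L1norm (cube r) (\<lambda>x. f x - ht x) = integral (cube r) (\<lambda>x. f x - ht x)"
      unfolding L1norm_def by (rule Henstock_Kurzweil_Integration.integral_cong) (use htf in auto)
    then show ?thesis using integral_diff[OF fi hti] by simp
  qed
  have "integral (cube r) (\<lambda>x. h x - ht x) = integral (cube r) h - integral (cube r) ht"
    by (rule integral_diff[OF hi hti])
  then show "L1norm (cube r) (\<lambda>x. f x - h x) \<le> L1norm (cube r) (\<lambda>x. f x - ht x)"
    using I0 e1 e2 by simp
qed

end
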